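(* Let $A$ be an algebra over a field with multiplication $\star$ satisfying the Tortken identity $$(a\star b)\star(c\star d)-(a\star d)\star(c\star b)=(a,b,c)\star d-(a,d,c)\star b\quad\text{for all }a,b,c,d\in A.$$ (i) If $A$ has a right unit (an element $e$ with $a\star e=a$ for all $a$), then $a\star(b\star c+c\star b)=2(a\star b)\star c$ for all $a,b,c\in A$. (ii) If $A$ has a left unit (an element $e$ with $e\star a=a$ for all $a$), then $A$ is associative and commutative.
   Context: The associator is $(a,b,c)=a\star(b\star c)-(a\star b)\star c$. *)

theory Defs
  imports Complex_Main
begin

definition is_algebra :: "('k::field \<Rightarrow> 'a::ab_group_add \<Rightarrow> 'a) \<Rightarrow> ('a \<Rightarrow> 'a \<Rightarrow> 'a) \<Rightarrow> bool" where
  "is_algebra scale mult \<longleftrightarrow> vector_space scale \<and>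
     (\<forall>x y z. mult (x + y) z = mult x z + mult y z) \<and>
     (\<forall>x y z. mult x (y + z) = mult x y + mult x z) \<and>
     (\<forall>c x y. mult (scale c x) y = scale c (mult x y)) \<and>
     (\<forall>c x y. mult x (scale c y) = scale c (mult x y))"

definition associator :: "('a::ab_group_add \<Rightarrow> 'a \<Rightarrow> 'a) \<Rightarrow> 'a \<Rightarrow> 'a \<Rightarrow> 'a \<Rightarrow> 'a" where
  "associator mult a b c = mult a (mult b c) - mult (mult a b) c"

definition tortken :: "('a::ab_group_add \<Rightarrow> 'a \<Rightarrow> 'a) \<Rightarrow> bool" where
  "tortken mult \<longleftrightarrow> (\<forall>a b c d.
     mult (mult a b) (mult c d) - mult (mult a d) (mult c b)
       = mult (associator mult a b c) d - mult (associator mult a d c) b)"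

end

theory Submission
  imports Defs
begin

theorem mainTheorem2:
  fixes scale :: "'k::field \<Rightarrow> 'a::ab_group_add \<Rightarrow> 'a"
    and mult :: "'a \<Rightarrow> 'a \<Rightarrow> 'a"
  assumes "is_algebra scale mult"
    and "tortken mult"
  shows "((\<exists>e. \<forall>a. mult a e = a) \<longrightarrow>
            (\<forall>a b c. mult a (mult b c + mult c b) = scale 2 (mult (mult a b) c)))
       \<and> ((\<exists>e. \<forall>a. mult e a = a) \<longrightarrow>
            (\<forall>a b c. mult a (mult b c) = mult (mult a b) c) \<and> (\<forall>a b. mult a b = mult b a))"
proof -
  have vs: "vector_space scale" and addL: "\<And>x y z. mult (x + y) z = mult x z + mult y z"
    and addR: "\<And>x y z. mult x (y + z) = mult x y + mult x z"
    using assms(1) unfolding is_algebra_def by auto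
  have T: "\<And>a b c d. mult (mult a b) (mult c d) - mult (mult a d) (mult c b)
       = mult (associator mult a b c) d - mult (associator mult a d c) b"
    using assms(2) unfolding tortken_def by blast
  have z0: "\<And>b. mult 0 b = 0" using addL[of 0 0] by simp
  have d: "\<And>a b x. scale (a + b) x = scale a x + scale b x"
    and o: "\<And>x. scale 1 x = x" using vs unfolding vector_space_def by auto
  have s2: "\<And>x. scale 2 x = x + x"
  proof -
    fix x
    have "scale 2 x = scale (1+1) x" by simp
    also have "\<dots> = scale 1 x + scale 1 x" by (rule d)
    finally show "scale 2 x = x + x" by (simp add: o)
  qed
  have P1: "\<forall>a b c. mult a (mult b c + mult c b) = scale 2 (mult (mult a b) c)"
    if e: "\<And>a. mult a e = a" for e
  proof (intro allI)
    fix a b c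
    have L: "\<And>a d. mult a (mult e d) = mult a d"
    proof -
      fix a d
      have "mult (mult a e) (mult e d) - mult (mult a d) (mult e e)
        = mult (associator mult a e e) d - mult (associator mult a d e) e" by (rule T)
      then show "mult a (mult e d) = mult a d"
        by (simp add: e associator_def z0)
    qed
    have "mult (mult a b) (mult c e) - mult (mult a e) (mult c b)
        = mult (associator mult a b c) e - mult (associator mult a e c) b" by (rule T)
    then have "mult (mult a b) c - mult a (mult c b) = mult a (mult b c) - mult (mult a b) c"
      by (simp add: e associator_def L z0)
    then show "mult a (mult b c + mult c b) = scale 2 (mult (mult a b) c)"
      by (simp add: s2 addR algebra_simps eq_diff_eq diff_eq_eq)
  qed
  have P2: "(\<forall>a b c. mult a (mult b c) = mult (mult a b) c) \<and> (\<forall>a b. mult a b = mult b a)"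
    if e: "\<And>a. mult e a = a" for e
  proof -
    have one: "\<And>b c d. mult b (mult c d) = mult d (mult c b)"
    proof -
      fix b c d
      have "mult (mult e b) (mult c d) - mult (mult e d) (mult c b)
        = mult (associator mult e b c) d - mult (associator mult e d c) b" by (rule T)
      then show "mult b (mult c d) = mult d (mult c b)"
        by (simp add: e associator_def z0)
    qed
    have comm: "\<And>a b. mult a b = mult b a"
      using one[of _ e] e by simp
    show ?thesis
      using one comm by metis
  qed
  show ?thesis using P1 P2 by blast
qed

end
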